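(* Let $R$ be a commutative hyperring with no zero divisors (i.e. $xy=0$ implies $x=0$ or $y=0$). If $I$ is a relational subhyperring of $R$ such that $xy\in I$ for all $x\in R$ and $y\in I$, then $I$ is a hyperideal of $R$.
   Context: A canonical hypergroup is a triple $(H,+,0)$ where $H\neq\emptyset$, $+$ assigns to each $(x,y)\in H\times H$ a subset $x+y\subseteq H$ (for $A,B\subseteq H$ put $A+B:=\bigcup_{a\in A,b\in B}a+b$, $x+A:=\{x\}+A$), and $0\in H$, such that for all $x,y,z\in H$: $(x+y)+z=x+(y+z)$; $x+y=y+x$; there is a unique $-x\in H$ with $0\in x+(-x)$; and $z\in x+y$ implies $y\in z+(-x)$. Write $x-y:=x+(-y)$. A (commutative) hyperring is $(R,+,\cdot,0)$ with $(R,+,0)$ a canonical hypergroup, $(R,\cdot)$ a commutative semigroup with $0x=0$ for all $x$, and $x(y+z)=xy+xz$ for all $x,y,z$ (where $xA:=\{xa:a\in A\}$). A relational subhyperring of $R$ is a multiplicatively closed subset $S\subseteq R$ such that, with the induced operation $x+_Sy:=(x+y)\cap S$, $(S,+_S,\cdot,0)$ is a hyperring. A (traditional) subhyperring is a subset $S$ with $0\in S$ and $x-y\subseteq S$, $xy\in S$ for all $x,y\in S$. A hyperideal of $R$ is a subhyperring $I$ with $xy\in I$ for all $x\in R$, $y\in I$. *)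

theory Defs
  imports Main
begin

text \<open>Everything is relativised
  to the carrier so that induced substructures can be expressed.\<close>

definition set_add :: "('a \<Rightarrow> 'a \<Rightarrow> 'a set) \<Rightarrow> 'a set \<Rightarrow> 'a set \<Rightarrow> 'a set" where
  "set_add add A B = (\<Union>a\<in>A. \<Union>b\<in>B. add a b)"

definition hneg :: "'a set \<Rightarrow> ('a \<Rightarrow> 'a \<Rightarrow> 'a set) \<Rightarrow> 'a \<Rightarrow> 'a \<Rightarrow> 'a" where
  "hneg H add z x = (THE y. y \<in> H \<and> z \<in> add x y)"

definition canonical_hypergroup :: "'a set \<Rightarrow> ('a \<Rightarrow> 'a \<Rightarrow> 'a set) \<Rightarrow> 'a \<Rightarrow> bool" where
  "canonical_hypergroup H add z \<longleftrightarrow>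
     H \<noteq> {} \<and> z \<in> H \<and>
     (\<forall>x\<in>H. \<forall>y\<in>H. add x y \<subseteq> H) \<and>
     (\<forall>x\<in>H. \<forall>y\<in>H. \<forall>w\<in>H. set_add add (add x y) {w} = set_add add {x} (add y w)) \<and>
     (\<forall>x\<in>H. \<forall>y\<in>H. add x y = add y x) \<and>
     (\<forall>x\<in>H. \<exists>!y. y \<in> H \<and> z \<in> add x y) \<and>
     (\<forall>x\<in>H. \<forall>y\<in>H. \<forall>w\<in>H. w \<in> add x y \<longrightarrow> y \<in> add w (hneg H add z x))"

definition hyperring :: "'a set \<Rightarrow> ('a \<Rightarrow> 'a \<Rightarrow> 'a set) \<Rightarrow> ('a \<Rightarrow> 'a \<Rightarrow> 'a) \<Rightarrow> 'a \<Rightarrow> bool" where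
  "hyperring R add mul z \<longleftrightarrow>
     canonical_hypergroup R add z \<and>
     (\<forall>x\<in>R. \<forall>y\<in>R. mul x y \<in> R) \<and>
     (\<forall>x\<in>R. \<forall>y\<in>R. \<forall>w\<in>R. mul (mul x y) w = mul x (mul y w)) \<and>
     (\<forall>x\<in>R. \<forall>y\<in>R. mul x y = mul y x) \<and>
     (\<forall>x\<in>R. mul z x = z) \<and>
     (\<forall>x\<in>R. \<forall>y\<in>R. \<forall>w\<in>R. mul x ` add y w = set_add add {mul x y} {mul x w})"

definition no_zero_divisors_hr :: "'a set \<Rightarrow> ('a \<Rightarrow> 'a \<Rightarrow> 'a) \<Rightarrow> 'a \<Rightarrow> bool" where
  "no_zero_divisors_hr R mul z \<longleftrightarrow>
     (\<forall>x\<in>R. \<forall>y\<in>R. mul x y = z \<longrightarrow> x = z \<or> y = z)"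

definition relational_subhyperring ::
  "'a set \<Rightarrow> ('a \<Rightarrow> 'a \<Rightarrow> 'a set) \<Rightarrow> ('a \<Rightarrow> 'a \<Rightarrow> 'a) \<Rightarrow> 'a \<Rightarrow> 'a set \<Rightarrow> bool" where
  "relational_subhyperring R add mul z S \<longleftrightarrow>
     S \<subseteq> R \<and>
     (\<forall>x\<in>S. \<forall>y\<in>S. mul x y \<in> S) \<and>
     hyperring S (\<lambda>x y. add x y \<inter> S) mul z"

definition subhyperring ::
  "'a set \<Rightarrow> ('a \<Rightarrow> 'a \<Rightarrow> 'a set) \<Rightarrow> ('a \<Rightarrow> 'a \<Rightarrow> 'a) \<Rightarrow> 'a \<Rightarrow> 'a set \<Rightarrow> bool" where
  "subhyperring R add mul z S \<longleftrightarrow>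
     S \<subseteq> R \<and> z \<in> S \<and>
     (\<forall>x\<in>S. \<forall>y\<in>S. add x (hneg R add z y) \<subseteq> S \<and> mul x y \<in> S)"

definition hyperideal ::
  "'a set \<Rightarrow> ('a \<Rightarrow> 'a \<Rightarrow> 'a set) \<Rightarrow> ('a \<Rightarrow> 'a \<Rightarrow> 'a) \<Rightarrow> 'a \<Rightarrow> 'a set \<Rightarrow> bool" where
  "hyperideal R add mul z I \<longleftrightarrow>
     subhyperring R add mul z I \<and> (\<forall>x\<in>R. \<forall>y\<in>I. mul x y \<in> I)"

end

theory Submission
  imports Defs
begin

theorem lemma2p31:
  assumes "hyperring R add mul z"
    and "no_zero_divisors_hr R mul z"
    and "relational_subhyperring R add mul z I"
    and "\<forall>x\<in>R. \<forall>y\<in>I. mul x y \<in> I"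
  shows "hyperideal R add mul z I"
proof -
  have cg: "canonical_hypergroup R add z" using assms(1) unfolding hyperring_def by blast
  have C: "z \<in> R" "\<forall>x\<in>R. \<forall>y\<in>R. add x y \<subseteq> R" "\<forall>x\<in>R. \<forall>y\<in>R. add x y = add y x"
     "\<forall>x\<in>R. \<exists>!y. y \<in> R \<and> z \<in> add x y"
     "\<forall>x\<in>R. \<forall>y\<in>R. \<forall>w\<in>R. w \<in> add x y \<longrightarrow> y \<in> add w (hneg R add z x)"
    using cg unfolding canonical_hypergroup_def by simp_all
  have zR: "z \<in> R" using C(1) .
  have cl: "\<And>x y. x\<in>R \<Longrightarrow> y\<in>R \<Longrightarrow> add x y \<subseteq> R" using C(2) by blast
  have com: "\<And>x y. x\<in>R \<Longrightarrow> y\<in>R \<Longrightarrow> add x y = add y x" using C(3) by blast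
  have inv: "\<And>x. x\<in>R \<Longrightarrow> \<exists>!y. y \<in> R \<and> z \<in> add x y" using C(4) by blast
  have rev: "\<And>x y w. x\<in>R \<Longrightarrow> y\<in>R \<Longrightarrow> w\<in>R \<Longrightarrow> w \<in> add x y \<Longrightarrow> y \<in> add w (hneg R add z x)"
    using C(5) by blast
  have mcl: "\<And>x y. x\<in>R \<Longrightarrow> y\<in>R \<Longrightarrow> mul x y \<in> R"
    and mcom: "\<And>x y. x\<in>R \<Longrightarrow> y\<in>R \<Longrightarrow> mul x y = mul y x"
    and mz: "\<And>x. x\<in>R \<Longrightarrow> mul z x = z"
    and dist: "\<And>x y w. x\<in>R \<Longrightarrow> y\<in>R \<Longrightarrow> w\<in>R \<Longrightarrow> mul x ` add y w = set_add add {mul x y} {mul x w}"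
    using assms(1) unfolding hyperring_def by (meson, meson, meson, meson)
  have nzd: "\<And>x y. x\<in>R \<Longrightarrow> y\<in>R \<Longrightarrow> mul x y = z \<Longrightarrow> x = z \<or> y = z"
    using assms(2) unfolding no_zero_divisors_hr_def by blast
  have IR: "I \<subseteq> R" and hI: "hyperring I (\<lambda>x y. add x y \<inter> I) mul z"
    using assms(3) unfolding relational_subhyperring_def by (meson, meson)
  have cgI: "canonical_hypergroup I (\<lambda>x y. add x y \<inter> I) z" using hI unfolding hyperring_def by blast
  have zI: "z \<in> I" and invI: "\<And>x. x\<in>I \<Longrightarrow> \<exists>y. y \<in> I \<and> z \<in> add x y \<inter> I"
    using cgI unfolding canonical_hypergroup_def by (meson, meson)
  have distI: "\<And>x y w. x\<in>I \<Longrightarrow> y\<in>I \<Longrightarrow> w\<in>I \<Longrightarrow>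
      mul x ` (add y w \<inter> I) = set_add (\<lambda>x y. add x y \<inter> I) {mul x y} {mul x w}"
    using hI unfolding hyperring_def by meson
  have sa: "\<And>f a b. set_add f {a} {b} = f a b" unfolding set_add_def by simp
  have hn: "\<And>y. y \<in> R \<Longrightarrow> hneg R add z y \<in> R \<and> z \<in> add y (hneg R add z y)"
  proof -
    fix y assume "y \<in> R"
    from theI'[OF inv[OF this]] show "hneg R add z y \<in> R \<and> z \<in> add y (hneg R add z y)"
      unfolding hneg_def .
  qed
  have hnu: "\<And>y y'. y \<in> R \<Longrightarrow> y' \<in> R \<Longrightarrow> z \<in> add y y' \<Longrightarrow> y' = hneg R add z y"
    using hn inv by blast
  have canc: "\<And>a t t'. a \<in> R \<Longrightarrow> a \<noteq> z \<Longrightarrow> t \<in> R \<Longrightarrow> t' \<in> R \<Longrightarrow> mul a t = mul a t' \<Longrightarrow> t = t'"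
  proof -
    fix a t t' assume a: "a \<in> R" "a \<noteq> z" and t: "t \<in> R" "t' \<in> R" and e: "mul a t = mul a t'"
    define n where "n = hneg R add z t'"
    have n: "n \<in> R" "z \<in> add t' n" using hn[OF t(2)] n_def by auto
    have "mul a ` add t n = mul a ` add t' n" using dist[OF a(1) t(1) n(1)] dist[OF a(1) t(2) n(1)] e by simp
    moreover have "mul a z = z" using mz[OF a(1)] mcom[OF a(1) zR] by simp
    ultimately have "z \<in> mul a ` add t n" using n(2) by (metis image_eqI)
    then obtain u where u: "u \<in> add t n" "mul a u = z" by blast
    have "u \<in> R" using u(1) cl[OF t(1) n(1)] by blast
    hence "u = z" using nzd[OF a(1)] u(2) a(2) by blast
    hence "z \<in> add n t" "z \<in> add n t'" using u(1) n com t by auto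
    thus "t = t'" using inv[OF n(1)] t by blast
  qed
  have sumI: "\<And>x w. x \<in> I \<Longrightarrow> w \<in> I \<Longrightarrow> add x w \<subseteq> I"
  proof
    fix x w t assume x: "x \<in> I" and w: "w \<in> I" and t: "t \<in> add x w"
    have xR: "x \<in> R" and wR: "w \<in> R" using x w IR by auto
    have tR: "t \<in> R" using t cl[OF xR wR] by blast
    show "t \<in> I"
    proof (cases "\<exists>a\<in>I. a \<noteq> z")
      case True
      then obtain a where a: "a \<in> I" "a \<noteq> z" by blast
      have aR: "a \<in> R" using a IR by auto
      have "mul a t \<in> add (mul a x) (mul a w)"
        using dist[OF aR xR wR] t sa by (metis image_eqI)
      moreover have "mul a t \<in> I" using assms(4) tR a(1) mcom[OF aR tR] by metis
      ultimately have "mul a t \<in> mul a ` (add x w \<inter> I)"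
        using distI[OF a(1) x w] by (simp add: set_add_def)
      then obtain t' where t': "t' \<in> add x w" "t' \<in> I" "mul a t = mul a t'" by blast
      have "t = t'" using canc[OF aR a(2) tR] t' IR by blast
      thus ?thesis using t' by simp
    next
      case False
      hence xz: "x = z" "w = z" using x w by blast+
      obtain y where y: "y \<in> I" "z \<in> add z y" using invI[OF zI] by blast
      have "y = z" using False y by auto
      hence zz: "z \<in> add z z" using y by simp
      have h0: "hneg R add z z = z" using hnu[OF zR zR zz] by simp
      have "z \<in> add t z" using rev[OF zR zR tR] t xz h0 by simp
      hence "z \<in> add z t" using com[OF tR zR] by simp
      hence "t = z" using hnu[OF zR tR] h0 by simp
      thus ?thesis using zI by simp
    qed
  qed
  have negI: "\<And>y. y \<in> I \<Longrightarrow> hneg R add z y \<in> I"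
  proof -
    fix y assume y: "y \<in> I"
    obtain y' where y': "y' \<in> I" "z \<in> add y y'" using invI[OF y] by blast
    have "y' = hneg R add z y" using hnu y y' IR by blast
    thus "hneg R add z y \<in> I" using y' by simp
  qed
  have mI: "\<And>x y. x \<in> I \<Longrightarrow> y \<in> I \<Longrightarrow> mul x y \<in> I" using assms(4) IR by blast
  show ?thesis unfolding hyperideal_def subhyperring_def
    using IR zI sumI negI mI assms(4) by blast
qed

end
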